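(* Let $a,b,d$ be positive integers, $V = \mathbb{C}^a \oplus \mathbb{C}^b$ with basis $e_1,\ldots,e_a$ of $\mathbb{C}^a$ and $f_1,\ldots,f_b$ of $\mathbb{C}^b$, and $W = \bigotimes^d V$. Let the symmetric group $\mathfrak{S}_a$ act on $V$ by permuting $e_1,\ldots,e_a$ (i.e. via permutation matrices on $\mathbb{C}^a$) and trivially on $\mathbb{C}^b$, and diagonally on $W$. For $1\le i\le a$ let $\zeta_{i,b}:V\to V$ be the linear map with $\zeta_{i,b}(e_i)=f_b$ vanishing on all other basis vectors, and let $\varphi_{i,b}:W\to W$ be the linear map defined on basis tensors ($v_k\in\{e_1,\ldots,e_a,f_1,\ldots,f_b\}$) by \[ \varphi_{i,b}(v_1\otimes\cdots\otimes v_d) = \tfrac{1}{d}\sum_{k=1}^d v_1\otimes\cdots\otimes v_{k-1}\otimes \zeta_{i,b}(v_k)\otimes v_{k+1}\otimes\cdots\otimes v_d . \] Then the composition $\varphi_{1,b}\circ\varphi_{2,b}\circ\cdots\circ\varphi_{a,b}:W\to W$ maps $\mathfrak{S}_a$-invariant tensors to $\mathfrak{S}_a$-invariant tensors. *)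

theory Defs
  imports Complex_Main "HOL-Combinatorics.Permutations"
begin

text \<open>Basis of V = C^a (+) C^b: E i is e_i (1 \<le> i \<le> a), F j is f_j (1 \<le> j \<le> b).\<close>
datatype idx = E nat | F nat

definition valid_idx :: "nat \<Rightarrow> nat \<Rightarrow> idx \<Rightarrow> bool" where
  "valid_idx a b x = (case x of E i \<Rightarrow> 1 \<le> i \<and> i \<le> a | F j \<Rightarrow> 1 \<le> j \<and> j \<le> b)"

text \<open>Basis tensors v_1 (x) ... (x) v_d of W are words of length d over the basis.\<close>
definition words :: "nat \<Rightarrow> nat \<Rightarrow> nat \<Rightarrow> idx list set" where
  "words a b d = {w. length w = d \<and> (\<forall>x\<in>set w. valid_idx a b x)}"

text \<open>W = tensor power of V, as coefficient functions supported on basis tensors.\<close>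
definition tensors :: "nat \<Rightarrow> nat \<Rightarrow> nat \<Rightarrow> (idx list \<Rightarrow> complex) set" where
  "tensors a b d = {T. \<forall>w. w \<notin> words a b d \<longrightarrow> T w = 0}"

fun act :: "(nat \<Rightarrow> nat) \<Rightarrow> idx \<Rightarrow> idx" where
  "act \<sigma> (E i) = E (\<sigma> i)"
| "act \<sigma> (F j) = F j"

text \<open>Diagonal action on W: (sigma . T) has coefficient T(sigma^-1 w) at w; invariance under
  all sigma is equivalent to T \<circ> map (act sigma) = T for all sigma.\<close>
definition invariant :: "nat \<Rightarrow> (idx list \<Rightarrow> complex) \<Rightarrow> bool" where
  "invariant a T = (\<forall>\<sigma>. \<sigma> permutes {1..a} \<longrightarrow> (\<lambda>w. T (map (act \<sigma>) w)) = T)"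

text \<open>phi_{i,b}: the coefficient of basis tensor u in phi(T) is
  (1/d) \<Sum>_k [u_k = f_b] T(u with k-th letter replaced by e_i), since zeta_{i,b} sends
  e_i to f_b and kills all other basis vectors.\<close>
definition phi :: "nat \<Rightarrow> nat \<Rightarrow> nat \<Rightarrow> nat \<Rightarrow> (idx list \<Rightarrow> complex) \<Rightarrow> (idx list \<Rightarrow> complex)" where
  "phi a b d i T = (\<lambda>u. if u \<in> words a b d then
      (1 / of_nat d) * (\<Sum>k<d. if u ! k = F b then T (u[k := E i]) else 0)
    else 0)"

fun phis :: "nat \<Rightarrow> nat \<Rightarrow> nat \<Rightarrow> nat \<Rightarrow> (idx list \<Rightarrow> complex) \<Rightarrow> (idx list \<Rightarrow> complex)" where
  "phis a b d 0 = id"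
| "phis a b d (Suc n) = phis a b d n \<circ> phi a b d (Suc n)"

end

theory Submission
  imports Defs
begin

lemma upd_words: "u \<in> words a b d \<Longrightarrow> k < d \<Longrightarrow> 1 \<le> i \<Longrightarrow> i \<le> a \<Longrightarrow> u[k:=E i] \<in> words a b d"
  by (auto simp: words_def valid_idx_def dest: set_update_subset_insert[THEN subsetD])

lemma phi_out: "u \<in> words a b d \<Longrightarrow> phi a b d i T u =
   (1 / of_nat d) * (\<Sum>k<d. if u ! k = F b then T (u[k := E i]) else 0)"
  by (simp add: phi_def)

lemma inner: "u \<in> words a b d \<Longrightarrow> k < d \<Longrightarrow> 1 \<le> i \<Longrightarrow> i \<le> a \<Longrightarrow>
  phi a b d j S (u[k:=E i]) = (1 / of_nat d) * (\<Sum>l<d. if l \<noteq> k \<and> u!l = F b then S ((u[k := E i])[l := E j]) else 0)"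
proof -
  assume u: "u \<in> words a b d" and k: "k < d" and i: "1 \<le> i" "i \<le> a"
  have len: "length u = d" using u by (simp add: words_def)
  have "phi a b d j S (u[k:=E i]) = (1 / of_nat d) * (\<Sum>l<d. if u[k:=E i] ! l = F b then S ((u[k := E i])[l := E j]) else 0)"
    using phi_out[OF upd_words[OF u k i]] .
  also have "\<dots> = (1 / of_nat d) * (\<Sum>l<d. if l \<noteq> k \<and> u!l = F b then S ((u[k := E i])[l := E j]) else 0)"
    using k by (intro arg_cong[where f="\<lambda>x. _ * x"] sum.cong) (auto simp: len nth_list_update split: if_splits)
  finally show ?thesis .
qed

lemma double: "u \<in> words a b d \<Longrightarrow> 1 \<le> i \<Longrightarrow> i \<le> a \<Longrightarrow>
  phi a b d i (phi a b d j S) u = (1 / of_nat d) * (1 / of_nat d) *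
    (\<Sum>k<d. \<Sum>l<d. if u!k = F b \<and> l \<noteq> k \<and> u!l = F b then S ((u[k := E i])[l := E j]) else 0)"
proof -
  assume u: "u \<in> words a b d" and i: "1 \<le> i" "i \<le> a"
  have "phi a b d i (phi a b d j S) u = (1 / of_nat d) * (\<Sum>k<d. if u ! k = F b then phi a b d j S (u[k := E i]) else 0)"
    using phi_out[OF u] .
  also have "\<dots> = (1 / of_nat d) * (\<Sum>k<d. (1 / of_nat d) * (\<Sum>l<d. if u!k = F b \<and> l \<noteq> k \<and> u!l = F b then S ((u[k := E i])[l := E j]) else 0))"
    by (rule arg_cong[where f="\<lambda>x. _ * x"], rule sum.cong, auto simp: inner[OF u _ i] intro!: sum.neutral)
  also have "\<dots> = (1 / of_nat d) * (1 / of_nat d) *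
    (\<Sum>k<d. \<Sum>l<d. if u!k = F b \<and> l \<noteq> k \<and> u!l = F b then S ((u[k := E i])[l := E j]) else 0)"
    by (simp add: sum_distrib_left)
  finally show ?thesis .
qed

lemma comm: "1 \<le> i \<Longrightarrow> i \<le> a \<Longrightarrow> 1 \<le> j \<Longrightarrow> j \<le> a \<Longrightarrow>
  phi a b d i (phi a b d j S) = phi a b d j (phi a b d i S)"
proof (rule ext)
  fix u
  assume ij: "1 \<le> i" "i \<le> a" "1 \<le> j" "j \<le> a"
  show "phi a b d i (phi a b d j S) u = phi a b d j (phi a b d i S) u"
  proof (cases "u \<in> words a b d")
    case False then show ?thesis by (simp add: phi_def)
  next
    case True
    have "(\<Sum>k<d. \<Sum>l<d. if u!k = F b \<and> l \<noteq> k \<and> u!l = F b then S ((u[k := E i])[l := E j]) else 0)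
        = (\<Sum>l<d. \<Sum>k<d. if u!k = F b \<and> l \<noteq> k \<and> u!l = F b then S ((u[k := E i])[l := E j]) else 0)"
      by (rule sum.swap)
    also have "\<dots> = (\<Sum>l<d. \<Sum>k<d. if u!l = F b \<and> k \<noteq> l \<and> u!k = F b then S ((u[l := E j])[k := E i]) else 0)"
      by (intro sum.cong refl) (auto simp: list_update_swap)
    finally show ?thesis using double[OF True ij(1,2), of j S] double[OF True ij(3,4), of i S] by simp
  qed
qed

fun pl :: "nat \<Rightarrow> nat \<Rightarrow> nat \<Rightarrow> nat list \<Rightarrow> (idx list \<Rightarrow> complex) \<Rightarrow> (idx list \<Rightarrow> complex)" where
  "pl a b d [] T = T"
| "pl a b d (i # is) T = phi a b d i (pl a b d is T)"

lemma pl_append: "pl a b d (xs @ ys) T = pl a b d xs (pl a b d ys T)"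
  by (induction xs) auto

lemma phis_pl: "phis a b d n T = pl a b d [1..<Suc n] T"
  by (induction n arbitrary: T) (auto simp: pl_append)

lemma pl_move: "set (ys1 @ x # ys2) \<subseteq> {1..a} \<Longrightarrow>
  pl a b d (ys1 @ x # ys2) T = phi a b d x (pl a b d (ys1 @ ys2) T)"
  by (induction ys1) (auto simp: comm)

lemma pl_perm: "mset xs = mset ys \<Longrightarrow> set ys \<subseteq> {1..a} \<Longrightarrow> pl a b d xs T = pl a b d ys T"
proof (induction xs arbitrary: ys)
  case Nil then show ?case by simp
next
  case (Cons x xs)
  have "x \<in> set ys" using Cons.prems(1) by (metis list.set_intros(1) set_mset_mset)
  then obtain ys1 ys2 where ys: "ys = ys1 @ x # ys2" by (meson split_list)
  have m: "mset xs = mset (ys1 @ ys2)" using Cons.prems(1) ys by simp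
  have s: "set (ys1 @ ys2) \<subseteq> {1..a}" using Cons.prems(2) ys by auto
  show ?case using Cons.IH[OF m s] pl_move[of ys1 x ys2 a b d T] Cons.prems(2) ys by simp
qed

lemma act_F: "act \<sigma> x = F b \<longleftrightarrow> x = F b"
  by (cases x) auto

lemma words_act: "\<sigma> permutes {1..a} \<Longrightarrow> map (act \<sigma>) u \<in> words a b d \<longleftrightarrow> u \<in> words a b d"
proof -
  assume p: "\<sigma> permutes {1..a}"
  have "valid_idx a b (act \<sigma> x) \<longleftrightarrow> valid_idx a b x" for x
    using permutes_in_image[OF p] by (cases x) (auto simp: valid_idx_def)
  then show ?thesis by (auto simp: words_def)
qed

lemma equiv: "\<sigma> permutes {1..a} \<Longrightarrow>
  (\<lambda>u. phi a b d i S (map (act \<sigma>) u)) = phi a b d (inv \<sigma> i) (\<lambda>u. S (map (act \<sigma>) u))"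
proof (rule ext)
  fix u
  assume p: "\<sigma> permutes {1..a}"
  show "phi a b d i S (map (act \<sigma>) u) = phi a b d (inv \<sigma> i) (\<lambda>u. S (map (act \<sigma>) u)) u"
  proof (cases "u \<in> words a b d")
    case False then show ?thesis using words_act[OF p] by (simp add: phi_def)
  next
    case True
    have len: "length u = d" using True by (simp add: words_def)
    have si: "\<sigma> (inv \<sigma> i) = i" using p by (simp add: permutes_inverses(1))
    then have upd: "(map (act \<sigma>) u)[k := E i] = map (act \<sigma>) (u[k := E (inv \<sigma> i)])" for k
      by (simp add: map_update)
    have "(\<Sum>k<d. if map (act \<sigma>) u ! k = F b then S ((map (act \<sigma>) u)[k := E i]) else 0)
       = (\<Sum>k<d. if u ! k = F b then S (map (act \<sigma>) (u[k := E (inv \<sigma> i)])) else 0)"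
      by (intro sum.cong refl) (auto simp: len act_F upd)
    then show ?thesis using True words_act[OF p] len
      by (simp only: phi_out)
  qed
qed

lemma pl_equiv: "\<sigma> permutes {1..a} \<Longrightarrow>
  (\<lambda>u. pl a b d xs S (map (act \<sigma>) u)) = pl a b d (map (inv \<sigma>) xs) (\<lambda>u. S (map (act \<sigma>) u))"
proof (induction xs)
  case Nil then show ?case by simp
next
  case (Cons x xs)
  then show ?case using equiv[OF Cons.prems, of b d x "pl a b d xs S"] by simp
qed

theorem claim3p1:
  fixes a b d :: nat and T :: "idx list \<Rightarrow> complex"
  assumes "a > 0" and "b > 0" and "d > 0"
    and "T \<in> tensors a b d"
    and "invariant a T"
  shows "invariant a (phis a b d a T)"
  unfolding invariant_def
proof (intro allI impI)
  fix \<sigma> assume p: "\<sigma> permutes {1..a}"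
  have T: "(\<lambda>w. T (map (act \<sigma>) w)) = T" using assms(5) p by (simp add: invariant_def)
  have pi: "inv \<sigma> permutes {1..a}" using p by (simp add: permutes_inv)
  have m: "mset (map (inv \<sigma>) [1..<Suc a]) = mset [1..<Suc a]"
  proof -
    have "distinct (map (inv \<sigma>) [1..<Suc a])"
      using pi by (simp add: distinct_map permutes_inj_on)
    moreover have "set (map (inv \<sigma>) [1..<Suc a]) = set [1..<Suc a]"
      proof -
      have "set [1..<Suc a] = {1..a}" by auto
      then show ?thesis using permutes_image[OF pi] by simp
    qed
    ultimately show ?thesis by (metis distinct_upt set_eq_iff_mset_eq_distinct)
  qed
  have s: "set [1..<Suc a] \<subseteq> {1..a}" by auto
  show "(\<lambda>w. phis a b d a T (map (act \<sigma>) w)) = phis a b d a T"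
    unfolding phis_pl pl_equiv[OF p] T using pl_perm[OF m s] by simp
qed

end
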